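(* (1) For all $\mathtt{dCBN}$ terms $M,N$: $M^n\{N^n/x\} = (M\{N/x\})^n$. (2) For all $\mathtt{dCBV}$ terms $M,N$: if $N^v = !P$ for some $P$, then $(M\{N/x\})^v = M^v\{P/x\}$.
   Context: $\mathtt{dCBN}$ and $\mathtt{dCBV}$ share the syntax $M,N::=x\mid\lambda x.M\mid MN\mid M[N/x]$ ($M[N/x]$ an explicit substitution binding $x$); $M\{N/x\}$ is capture-avoiding substitution. List contexts $L::=\square\mid L[N/x]$. $\mathtt{dBang}$ terms are $M ::= x\mid\lambda x.M\mid MN\mid M[N/x]\mid\ !M\mid\mathrm{der}\,M$. The translation $(\cdot)^n$ into $\mathtt{dBang}$: $x^n=x$, $(\lambda x.M)^n=\lambda x.M^n$, $(MN)^n=M^n\,!N^n$, $(M[N/x])^n=M^n[!N^n/x]$. The translation $(\cdot)^v$: $x^v=!x$, $(\lambda x.M)^v=!(\lambda x.M^v)$, $(MN)^v=L\langle P\rangle N^v$ if $M^v=L\langle !P\rangle$ for a $\mathtt{dBang}$ list context $L$, and $(MN)^v=\mathrm{der}(M^v)\,N^v$ otherwise; $(M[N/x])^v=M^v[N^v/x]$. *)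

theory Defs
  imports Main
begin

(* Terms are represented with de Bruijn indices (terms up to alpha-equivalence).
   ES M N  represents  M[N/x]  where x is bound in M (index 0 of M). *)
datatype lam = Var nat | Lam lam | App lam lam | ES lam lam

datatype bang = BVar nat | BLam bang | BApp bang bang | BES bang bang | Bang bang | Der bang

primrec lift :: "lam \<Rightarrow> nat \<Rightarrow> lam" where
  "lift (Var i) k = (if i < k then Var i else Var (Suc i))"
| "lift (Lam M) k = Lam (lift M (Suc k))"
| "lift (App M N) k = App (lift M k) (lift N k)"
| "lift (ES M N) k = ES (lift M (Suc k)) (lift N k)"

primrec blift :: "bang \<Rightarrow> nat \<Rightarrow> bang" where
  "blift (BVar i) k = (if i < k then BVar i else BVar (Suc i))"
| "blift (BLam M) k = BLam (blift M (Suc k))"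
| "blift (BApp M N) k = BApp (blift M k) (blift N k)"
| "blift (BES M N) k = BES (blift M (Suc k)) (blift N k)"
| "blift (Bang M) k = Bang (blift M k)"
| "blift (Der M) k = Der (blift M k)"

primrec subst :: "lam \<Rightarrow> nat \<Rightarrow> lam \<Rightarrow> lam" where
  "subst (Var i) k N = (if i < k then Var i else if i = k then N else Var (i - 1))"
| "subst (Lam M) k N = Lam (subst M (Suc k) (lift N 0))"
| "subst (App M M') k N = App (subst M k N) (subst M' k N)"
| "subst (ES M M') k N = ES (subst M (Suc k) (lift N 0)) (subst M' k N)"

primrec bsubst :: "bang \<Rightarrow> nat \<Rightarrow> bang \<Rightarrow> bang" where
  "bsubst (BVar i) k N = (if i < k then BVar i else if i = k then N else BVar (i - 1))"
| "bsubst (BLam M) k N = BLam (bsubst M (Suc k) (blift N 0))"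
| "bsubst (BApp M M') k N = BApp (bsubst M k N) (bsubst M' k N)"
| "bsubst (BES M M') k N = BES (bsubst M (Suc k) (blift N 0)) (bsubst M' k N)"
| "bsubst (Bang M) k N = Bang (bsubst M k N)"
| "bsubst (Der M) k N = Der (bsubst M k N)"

(* dBang list contexts  L ::= [] | L[N/x] *)
datatype lctx = Hole | LES lctx bang

primrec plug :: "lctx \<Rightarrow> bang \<Rightarrow> bang" where
  "plug Hole P = P"
| "plug (LES L N) P = BES (plug L P) N"

primrec tr_n :: "lam \<Rightarrow> bang" where
  "tr_n (Var i) = BVar i"
| "tr_n (Lam M) = BLam (tr_n M)"
| "tr_n (App M N) = BApp (tr_n M) (Bang (tr_n N))"
| "tr_n (ES M N) = BES (tr_n M) (Bang (tr_n N))"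

primrec tr_v :: "lam \<Rightarrow> bang" where
  "tr_v (Var i) = Bang (BVar i)"
| "tr_v (Lam M) = Bang (BLam (tr_v M))"
| "tr_v (App M N) =
     (if \<exists>L P. tr_v M = plug L (Bang P)
      then (case (SOME LP. tr_v M = plug (fst LP) (Bang (snd LP))) of
              (L, P) \<Rightarrow> BApp (plug L P) (tr_v N))
      else BApp (Der (tr_v M)) (tr_v N))"
| "tr_v (ES M N) = BES (tr_v M) (tr_v N)"

end

theory Submission
  imports Defs
begin

lemma trn_lift: "tr_n (lift M k) = blift (tr_n M) k"
  by (induction M arbitrary: k) auto

lemma part1: "bsubst (tr_n M) k (tr_n N) = tr_n (subst M k N)"
  by (induction M arbitrary: k N) (auto simp: trn_lift[symmetric])

fun isb :: "bang \<Rightarrow> bool" where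
  "isb (Bang P) = True"
| "isb (BES A B) = isb A"
| "isb _ = False"

fun rem :: "bang \<Rightarrow> bang" where
  "rem (Bang P) = P"
| "rem (BES A B) = BES (rem A) B"
| "rem X = X"

lemma plug_rem: "X = plug L (Bang P) \<Longrightarrow> plug L P = rem X"
  by (induction L arbitrary: X) auto

lemma plug_isb: "(\<exists>L P. X = plug L (Bang P)) = isb X"
proof (induction X)
  case (BES A B)
  show ?case
  proof
    assume "\<exists>L P. BES A B = plug L (Bang P)"
    then obtain L P where h: "BES A B = plug L (Bang P)" by blast
    then obtain L' where "L = LES L' B" "A = plug L' (Bang P)" by (cases L) auto
    then show "isb (BES A B)" using BES by auto
  next
    assume "isb (BES A B)"
    then obtain L P where "A = plug L (Bang P)" using BES by auto
    then have "BES A B = plug (LES L B) (Bang P)" by simp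
    then show "\<exists>L P. BES A B = plug L (Bang P)" by blast
  qed
next
  case (Bang X)
  have "Bang X = plug Hole (Bang X)" by simp
  then show ?case by (auto simp del: plug.simps)
next
  case (BVar x) then show ?case by (metis bang.distinct isb.simps plug.simps lctx.exhaust)
next
  case (BLam x) then show ?case by (metis bang.distinct isb.simps plug.simps lctx.exhaust)
next
  case (BApp x y) then show ?case by (metis bang.distinct isb.simps plug.simps lctx.exhaust)
next
  case (Der x) then show ?case by (metis bang.distinct isb.simps plug.simps lctx.exhaust)
qed

lemma trv_App: "tr_v (App M N) =
  (if isb (tr_v M) then BApp (rem (tr_v M)) (tr_v N) else BApp (Der (tr_v M)) (tr_v N))"
proof (cases "isb (tr_v M)")
  case True
  then have ex: "\<exists>L P. tr_v M = plug L (Bang P)" using plug_isb by blast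
  then have "\<exists>LP. tr_v M = plug (fst LP) (Bang (snd LP))" by auto
  then have s: "tr_v M = plug (fst (SOME LP. tr_v M = plug (fst LP) (Bang (snd LP))))
       (Bang (snd (SOME LP. tr_v M = plug (fst LP) (Bang (snd LP)))))"
    by (rule someI_ex)
  show ?thesis using True ex plug_rem[OF s]
    by (auto split: prod.splits)
next
  case False
  then show ?thesis using plug_isb[of "tr_v M"] by auto
qed

lemma isb_blift: "isb (blift X k) = isb X"
  by (induction X arbitrary: k) auto

lemma rem_blift: "rem (blift X k) = blift (rem X) k"
  by (induction X arbitrary: k) auto

lemma trv_lift: "tr_v (lift M k) = blift (tr_v M) k"
  by (induction M arbitrary: k) (auto simp: trv_App isb_blift rem_blift simp del: tr_v.simps(3))

lemma isb_bsubst: "isb (bsubst (tr_v M) k P) = isb (tr_v M) \<and>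
   (isb (tr_v M) \<longrightarrow> rem (bsubst (tr_v M) k P) = bsubst (rem (tr_v M)) k P)"
  by (induction M arbitrary: k P) (auto simp: trv_App simp del: tr_v.simps(3))

lemma part2: "tr_v N = Bang P \<Longrightarrow> tr_v (subst M k N) = bsubst (tr_v M) k P"
proof (induction M arbitrary: k N P)
  case (Var i) then show ?case by auto
next
  case (Lam M)
  have "tr_v (lift N 0) = Bang (blift P 0)" using Lam.prems by (simp add: trv_lift)
  then show ?case using Lam.IH by simp
next
  case (App M1 M2)
  then show ?case using isb_bsubst[of M1 k P] by (simp add: trv_App del: tr_v.simps(3))
next
  case (ES M1 M2)
  have "tr_v (lift N 0) = Bang (blift P 0)" using ES.prems by (simp add: trv_lift)
  then show ?case using ES by simp
qed

theorem mainTheorem6: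
  shows "(\<forall>M N k. bsubst (tr_n M) k (tr_n N) = tr_n (subst M k N)) \<and>
         (\<forall>M N P k. tr_v N = Bang P \<longrightarrow> tr_v (subst M k N) = bsubst (tr_v M) k P)"
  using part1 part2 by blast

end
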